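(* Consider the optimization problem \[ \max_{\mathsf{V}_1,\dots,\mathsf{V}_K}\ \sum_{k=1}^K \log_2(1+\gamma_k)\quad\text{s.t.}\quad \sum_{k=1}^K\int_{\mathcal{A}}|\mathsf{V}_k(\mathbf{r})|^2\,d\mathbf{r}=P_{\max}, \] where \[ \gamma_k=\frac{|\mathcal{A}_k|\cdot\left|\int_{\mathcal{A}}\mathsf{H}_k(\mathbf{r})\mathsf{V}_k(\mathbf{r})\,d\mathbf{r}\right|^2}{\sum_{j=1,j\neq k}^K|\mathcal{A}_j|\cdot\left|\int_{\mathcal{A}}\mathsf{H}_k(\mathbf{r})\mathsf{V}_j(\mathbf{r})\,d\mathbf{r}\right|^2+\sigma_k^2}. \] Then the optimal beamforming lies in the function subspace spanned by $\mathsf{H}_1^*(\mathbf{r}),\dots,\mathsf{H}_K^*(\mathbf{r})$: for each $k$, the optimal $\mathsf{V}_k$ can be written as $\mathsf{V}_k(\mathbf{r})=\sum_{j=1}^K b_{jk}\mathsf{H}_j^*(\mathbf{r})$ for some complex scalars $b_{jk}$.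
   Context: A base station with a continuous aperture array occupying a region $\mathcal{A}\subseteq\mathbb{R}^3$ serves $K$ users. User $k$ has aperture of area $|\mathcal{A}_k|>0$ centered at $\mathbf{s}_k\in\mathbb{R}^3$, and noise variance $\sigma_k^2>0$; $P_{\max}>0$ is the transmit power budget. The beamforming $\mathsf{V}_k:\mathcal{A}\to\mathbb{C}$ for user $k$ is a square-integrable function. The channel response of user $k$ is \[ \mathsf{H}_k(\mathbf{r})=\sqrt{\frac{\mathbf{e}_r^T(\mathbf{s}_k-\mathbf{r})}{\|\mathbf{r}-\mathbf{s}_k\|}}\cdot\frac{j k_0\eta e^{-jk_0\|\mathbf{r}-\mathbf{s}_k\|}}{4\pi\|\mathbf{r}-\mathbf{s}_k\|}\left(1+\frac{j/k_0}{\|\mathbf{r}-\mathbf{s}_k\|}-\frac{1/k_0^2}{\|\mathbf{r}-\mathbf{s}_k\|^2}\right), \] where $\mathbf{e}_r\in\mathbb{R}^3$ is the normal vector of the base-station aperture, $\eta=120\pi$, $k_0=2\pi/\lambda$ with $\lambda$ the wavelength, and $j$ is the imaginary unit. $(\cdot)^*$ denotes complex conjugation. *)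

theory Defs
  imports "HOL-Analysis.Analysis"
begin

text \<open>Channel response H_k(r) of a user with aperture centre s, for a base-station
  aperture with normal vector er and wavelength lam (k0 = 2 pi / lam, eta = 120 pi).\<close>
definition chan :: "real^3 \<Rightarrow> real \<Rightarrow> real^3 \<Rightarrow> real^3 \<Rightarrow> complex" where
  "chan er lam s r =
     (let k0 = 2 * pi / lam; d = norm (r - s); eta = 120 * pi in
       csqrt (complex_of_real (er \<bullet> (s - r) / d))
       * (\<i> * complex_of_real (k0 * eta) * exp (- \<i> * complex_of_real (k0 * d))
          / complex_of_real (4 * pi * d))
       * (1 + (\<i> / complex_of_real k0) / complex_of_real d
            - complex_of_real (1 / k0\<^sup>2) / complex_of_real (d\<^sup>2)))"

definition sq_integrable_on :: "(real^3) set \<Rightarrow> (real^3 \<Rightarrow> complex) \<Rightarrow> bool" where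
  "sq_integrable_on A f \<longleftrightarrow>
     set_borel_measurable lborel A f \<and> set_integrable lborel A (\<lambda>r. (cmod (f r))\<^sup>2)"

definition feasible :: "(real^3) set \<Rightarrow> nat \<Rightarrow> real \<Rightarrow> (nat \<Rightarrow> real^3 \<Rightarrow> complex) \<Rightarrow> bool" where
  "feasible A K P V \<longleftrightarrow>
     (\<forall>k<K. sq_integrable_on A (V k)) \<and>
     (\<Sum>k<K. (LINT r:A|lborel. (cmod (V k r))\<^sup>2)) = P"

text \<open>SINR of user k; H k is the channel of user k, area k = |A_k|, sig2 k = sigma_k^2.\<close>
definition sinr :: "(real^3) set \<Rightarrow> nat \<Rightarrow> (nat \<Rightarrow> real^3 \<Rightarrow> complex) \<Rightarrow> (nat \<Rightarrow> real)
                    \<Rightarrow> (nat \<Rightarrow> real) \<Rightarrow> (nat \<Rightarrow> real^3 \<Rightarrow> complex) \<Rightarrow> nat \<Rightarrow> real" where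
  "sinr A K H area sig2 V k =
     area k * (cmod (LINT r:A|lborel. H k r * V k r))\<^sup>2 /
     ((\<Sum>j\<in>{..<K} - {k}. area j * (cmod (LINT r:A|lborel. H k r * V j r))\<^sup>2) + sig2 k)"

definition sum_rate :: "(real^3) set \<Rightarrow> nat \<Rightarrow> (nat \<Rightarrow> real^3 \<Rightarrow> complex) \<Rightarrow> (nat \<Rightarrow> real)
                    \<Rightarrow> (nat \<Rightarrow> real) \<Rightarrow> (nat \<Rightarrow> real^3 \<Rightarrow> complex) \<Rightarrow> real" where
  "sum_rate A K H area sig2 V = (\<Sum>k<K. log 2 (1 + sinr A K H area sig2 V k))"

end

theory Submission
  imports Defs
begin


definition L2 :: "'a measure \<Rightarrow> ('a \<Rightarrow> complex) \<Rightarrow> bool" where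
  "L2 N f \<longleftrightarrow> f \<in> borel_measurable N \<and> integrable N (\<lambda>x. (cmod (f x))\<^sup>2)"

definition ip :: "'a measure \<Rightarrow> ('a \<Rightarrow> complex) \<Rightarrow> ('a \<Rightarrow> complex) \<Rightarrow> complex" where
  "ip N f g = integral\<^sup>L N (\<lambda>x. f x * cnj (g x))"

definition nrm :: "'a measure \<Rightarrow> ('a \<Rightarrow> complex) \<Rightarrow> real" where
  "nrm N f = integral\<^sup>L N (\<lambda>x. (cmod (f x))\<^sup>2)"

lemma meas_cnj[measurable]: "f \<in> borel_measurable M \<Longrightarrow> (\<lambda>x. cnj (f x)) \<in> borel_measurable M"
  by (rule borel_measurable_continuous_on[where f=cnj]) (auto intro: continuous_on_cnj continuous_on_id)

lemma amgm_c: "cmod (a * cnj b) \<le> ((cmod a)\<^sup>2 + (cmod b)\<^sup>2) / 2"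
proof -
  have "0 \<le> (cmod a - cmod b)\<^sup>2" by simp
  then show ?thesis by (simp add: norm_mult power2_eq_square algebra_simps)
qed

lemma L2_prod_int: assumes "L2 N f" "L2 N g" shows "integrable N (\<lambda>x. f x * cnj (g x))"
proof (rule Bochner_Integration.integrable_bound)
  show "integrable N (\<lambda>x. ((cmod (f x))\<^sup>2 + (cmod (g x))\<^sup>2) / 2)"
    using assms unfolding L2_def by auto
  have [measurable]: "f \<in> borel_measurable N" "g \<in> borel_measurable N" using assms unfolding L2_def by auto
  show "(\<lambda>x. f x * cnj (g x)) \<in> borel_measurable N" by measurable
  show "AE x in N. norm (f x * cnj (g x)) \<le> norm (((cmod (f x))\<^sup>2 + (cmod (g x))\<^sup>2) / 2)"
    using amgm_c by (auto intro!: AE_I2 order.trans[OF amgm_c])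
qed

lemma L2_add: assumes "L2 N f" "L2 N g" shows "L2 N (\<lambda>x. f x + g x)"
  unfolding L2_def
proof
  have [measurable]: "f \<in> borel_measurable N" "g \<in> borel_measurable N" using assms unfolding L2_def by auto
  show "(\<lambda>x. f x + g x) \<in> borel_measurable N" by measurable
  have "integrable N (\<lambda>x. 2 * (cmod (f x))\<^sup>2 + 2 * (cmod (g x))\<^sup>2)"
    using assms unfolding L2_def by auto
  then show "integrable N (\<lambda>x. (cmod (f x + g x))\<^sup>2)"
  proof (rule Bochner_Integration.integrable_bound)
    show "(\<lambda>x. (cmod (f x + g x))\<^sup>2) \<in> borel_measurable N" by measurable
    have "(cmod (f x + g x))\<^sup>2 \<le> 2 * (cmod (f x))\<^sup>2 + 2 * (cmod (g x))\<^sup>2" for x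
    proof -
      have "(cmod (f x + g x))\<^sup>2 \<le> (cmod (f x) + cmod (g x))\<^sup>2"
        by (simp add: norm_triangle_ineq power_mono)
      also have "\<dots> \<le> 2 * (cmod (f x))\<^sup>2 + 2 * (cmod (g x))\<^sup>2"
        using amgm_c[of "f x" "g x"] by (simp add: power2_eq_square algebra_simps norm_mult)
      finally show ?thesis .
    qed
    then show "AE x in N. norm ((cmod (f x + g x))\<^sup>2) \<le> norm (2 * (cmod (f x))\<^sup>2 + 2 * (cmod (g x))\<^sup>2)"
      by (auto intro!: AE_I2)
  qed
qed

lemma L2_scale: assumes "L2 N f" shows "L2 N (\<lambda>x. c * f x)"
  using assms unfolding L2_def by (auto simp: norm_mult power_mult_distrib)

lemma L2_zero: "L2 N (\<lambda>x. 0)" unfolding L2_def by auto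

lemma L2_neg: assumes "L2 N f" shows "L2 N (\<lambda>x. - f x)"
  using L2_scale[OF assms, of "-1"] by simp

lemma L2_diff: assumes "L2 N f" "L2 N g" shows "L2 N (\<lambda>x. f x - g x)"
  using L2_add[OF assms(1) L2_neg[OF assms(2)]] by simp

lemma L2_sum: assumes "\<And>j. j \<in> S \<Longrightarrow> L2 N (h j)" shows "L2 N (\<lambda>x. \<Sum>j\<in>S. h j x)"
  using assms
proof (induction S rule: infinite_finite_induct)
  case (insert a F) then show ?case using L2_add[of N "h a" "\<lambda>x. \<Sum>j\<in>F. h j x"] by simp
qed (auto simp: L2_zero)

lemma L2_cnj: assumes "L2 N f" shows "L2 N (\<lambda>x. cnj (f x))"
  using assms unfolding L2_def by auto

lemma ip_add1: assumes "L2 N f" "L2 N g" "L2 N h"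
  shows "ip N (\<lambda>x. f x + g x) h = ip N f h + ip N g h"
  unfolding ip_def using L2_prod_int[OF assms(1,3)] L2_prod_int[OF assms(2,3)]
  by (simp add: distrib_right)

lemma ip_scale1: "ip N (\<lambda>x. c * f x) h = c * ip N f h"
  unfolding ip_def by (simp add: mult.assoc)

lemma ip_cnj: "ip N g f = cnj (ip N f g)"
  unfolding ip_def by (subst Bochner_Integration.integral_cnj[symmetric]) (simp add: mult.commute)

lemma ip_zero1: "ip N (\<lambda>x. 0) h = 0" unfolding ip_def by simp

lemma ip_diff1: assumes "L2 N f" "L2 N g" "L2 N h"
  shows "ip N (\<lambda>x. f x - g x) h = ip N f h - ip N g h"
proof -
  have "ip N (\<lambda>x. f x + (-1) * g x) h = ip N f h + ip N (\<lambda>x. (-1) * g x) h"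
    by (rule ip_add1) (use assms L2_scale[of N g "-1"] in auto)
  then show ?thesis using ip_scale1[of N "-1" g h] by simp
qed

lemma ip_sum1: assumes "\<And>j. j \<in> S \<Longrightarrow> L2 N (f j)" "L2 N h"
  shows "ip N (\<lambda>x. \<Sum>j\<in>S. f j x) h = (\<Sum>j\<in>S. ip N (f j) h)"
  using assms
proof (induction S rule: infinite_finite_induct)
  case (insert a F)
  have "ip N (\<lambda>x. \<Sum>j\<in>insert a F. f j x) h = ip N (\<lambda>x. f a x + (\<Sum>j\<in>F. f j x)) h"
    using insert by simp
  also have "\<dots> = ip N (f a) h + ip N (\<lambda>x. \<Sum>j\<in>F. f j x) h"
    by (rule ip_add1) (use insert L2_sum[of F N f] in auto)
  finally show ?case using insert by simp
qed (auto simp: ip_zero1)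

lemma ip_add2: assumes "L2 N f" "L2 N g" "L2 N h"
  shows "ip N h (\<lambda>x. f x + g x) = ip N h f + ip N h g"
  by (subst (1 2 3) ip_cnj) (simp add: ip_add1[OF assms])

lemma ip_scale2: "ip N h (\<lambda>x. c * f x) = cnj c * ip N h f"
  by (subst (1 2) ip_cnj) (simp add: ip_scale1)

lemma ip_diff2: assumes "L2 N f" "L2 N g" "L2 N h"
  shows "ip N h (\<lambda>x. f x - g x) = ip N h f - ip N h g"
  by (subst (1 2 3) ip_cnj) (simp add: ip_diff1[OF assms])

lemma ip_sum2: assumes "\<And>j. j \<in> S \<Longrightarrow> L2 N (f j)" "L2 N h"
  shows "ip N h (\<lambda>x. \<Sum>j\<in>S. f j x) = (\<Sum>j\<in>S. ip N h (f j))"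
  by (subst ip_cnj) (simp add: ip_sum1[OF assms] ip_cnj[of N h])

lemma ip_self: "ip N f f = complex_of_real (nrm N f)"
proof -
  have "(\<lambda>x. f x * cnj (f x)) = (\<lambda>x. complex_of_real ((cmod (f x))\<^sup>2))"
    by (rule ext) (metis complex_norm_square)
  then show ?thesis unfolding ip_def nrm_def
    using integral_complex_of_real[of N "\<lambda>x. (cmod (f x))\<^sup>2"] by simp
qed

lemma nrm_nonneg: "nrm N f \<ge> 0" unfolding nrm_def by simp

lemma nrm_zero_AE: assumes "L2 N f" "nrm N f = 0" shows "AE x in N. f x = 0"
proof -
  have "AE x in N. (cmod (f x))\<^sup>2 = 0"
    using assms integral_nonneg_eq_0_iff_AE[of N "\<lambda>x. (cmod (f x))\<^sup>2"] unfolding L2_def nrm_def by auto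
  then show ?thesis by auto
qed

lemma nrm_zero_ip: assumes "L2 N f" "nrm N f = 0" shows "ip N f g = 0"
proof -
  have "AE x in N. f x * cnj (g x) = 0" using nrm_zero_AE[OF assms] by auto
  then show ?thesis unfolding ip_def by (simp add: integral_eq_zero_AE)
qed

lemma ip_orth_comb:
  fixes n :: nat
  assumes "\<forall>i<n. L2 N (h i)" "L2 N f" "\<forall>i<n. ip N f (h i) = 0"
  shows "ip N f (\<lambda>x. \<Sum>j<n. c j * h j x) = 0"
proof -
  have "ip N f (\<lambda>x. \<Sum>j<n. c j * h j x) = (\<Sum>j<n. ip N f (\<lambda>x. c j * h j x))"
    by (rule ip_sum2) (use assms in \<open>auto intro: L2_scale\<close>)
  also have "\<dots> = 0" using assms by (simp add: ip_scale2)
  finally show ?thesis .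
qed

lemma proj:
  fixes n :: nat
  assumes "\<forall>i<n. L2 N (h i)" "L2 N v"
  shows "\<exists>b. \<forall>i<n. ip N (\<lambda>x. v x - (\<Sum>j<n. b j * h j x)) (h i) = 0"
  using assms
proof (induction n arbitrary: v)
  case 0
  then show ?case by simp
next
  case (Suc n)
  have hL: "\<forall>i<n. L2 N (h i)" and hn: "L2 N (h n)" using Suc.prems by auto
  obtain c where c: "\<forall>i<n. ip N (\<lambda>x. h n x - (\<Sum>j<n. c j * h j x)) (h i) = 0"
    using Suc.IH[OF hL hn] by blast
  obtain d where d: "\<forall>i<n. ip N (\<lambda>x. v x - (\<Sum>j<n. d j * h j x)) (h i) = 0"
    using Suc.IH[OF hL Suc.prems(2)] by blast
  define u where "u = (\<lambda>x. h n x - (\<Sum>j<n. c j * h j x))"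
  define w where "w = (\<lambda>x. v x - (\<Sum>j<n. d j * h j x))"
  have combL: "L2 N (\<lambda>x. \<Sum>j<n. a j * h j x)" for a
    by (rule L2_sum) (use hL in \<open>auto intro: L2_scale\<close>)
  have uL: "L2 N u" unfolding u_def by (rule L2_diff[OF hn combL])
  have wL: "L2 N w" unfolding w_def by (rule L2_diff[OF Suc.prems(2) combL])
  have uo: "\<forall>i<n. ip N u (h i) = 0" using c unfolding u_def .
  have wo: "\<forall>i<n. ip N w (h i) = 0" using d unfolding w_def .
  have hn_eq: "h n = (\<lambda>x. u x + (\<Sum>j<n. c j * h j x))" unfolding u_def by simp
  have to_u: "ip N f (h n) = ip N f u" if "L2 N f" "\<forall>i<n. ip N f (h i) = 0" for f
  proof -
    have "ip N f (h n) = ip N f u + ip N f (\<lambda>x. \<Sum>j<n. c j * h j x)"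
      by (subst hn_eq) (rule ip_add2[OF uL combL that(1)])
    then show ?thesis using ip_orth_comb[OF hL that] by simp
  qed
  show ?case
  proof (cases "nrm N u = 0")
    case True
    define b where "b = d(n := 0)"
    have feq: "(\<lambda>x. v x - (\<Sum>j<Suc n. b j * h j x)) = w"
    proof (rule ext)
      fix x
      have "(\<Sum>j<n. b j * h j x) = (\<Sum>j<n. d j * h j x)"
        unfolding b_def by (rule sum.cong) auto
      then show "v x - (\<Sum>j<Suc n. b j * h j x) = w x"
        unfolding w_def by (simp add: b_def)
    qed
    have "ip N w (h n) = 0"
      using to_u[OF wL wo] ip_cnj[of N w u] nrm_zero_ip[OF uL True, of w] by simp
    then show ?thesis using wo feq by (intro exI[of _ b]) (auto simp: less_Suc_eq)
  next
    case False
    define t where "t = ip N w u / ip N u u"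
    define b where "b = (\<lambda>j. if j = n then t else d j - t * c j)"
    have feq: "(\<lambda>x. v x - (\<Sum>j<Suc n. b j * h j x)) = (\<lambda>x. w x - t * u x)"
    proof (rule ext)
      fix x
      have "(\<Sum>j<n. b j * h j x) = (\<Sum>j<n. d j * h j x - t * (c j * h j x))"
        by (rule sum.cong) (auto simp: b_def algebra_simps)
      also have "\<dots> = (\<Sum>j<n. d j * h j x) - t * (\<Sum>j<n. c j * h j x)"
        by (simp add: sum_subtractf sum_distrib_left)
      finally have s1: "(\<Sum>j<n. b j * h j x) = (\<Sum>j<n. d j * h j x) - t * (\<Sum>j<n. c j * h j x)" .
      have bn: "b n = t" by (simp add: b_def)
      have "(\<Sum>j<Suc n. b j * h j x) = (\<Sum>j<n. b j * h j x) + b n * h n x" by simp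
      then show "v x - (\<Sum>j<Suc n. b j * h j x) = w x - t * u x"
        unfolding w_def u_def using s1 bn by (simp add: algebra_simps)
    qed
    have fL: "L2 N (\<lambda>x. w x - t * u x)" by (rule L2_diff[OF wL L2_scale[OF uL]])
    have fo: "\<forall>i<n. ip N (\<lambda>x. w x - t * u x) (h i) = 0"
      using wo uo hL by (simp add: ip_diff1[OF wL L2_scale[OF uL]] ip_scale1)
    have "ip N (\<lambda>x. w x - t * u x) u = ip N w u - t * ip N u u"
      by (simp add: ip_diff1[OF wL L2_scale[OF uL] uL] ip_scale1)
    also have "\<dots> = 0" using False unfolding t_def by (simp add: ip_self)
    finally have "ip N (\<lambda>x. w x - t * u x) (h n) = 0" using to_u[OF fL fo] by simp
    then show ?thesis using fo feq by (intro exI[of _ b]) (auto simp: less_Suc_eq)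
  qed
qed



lemma transl:
  fixes A :: "(real^3) set" and g :: "real^3 \<Rightarrow> complex"
  assumes A: "A \<in> sets lborel"
  shows "sq_integrable_on A f \<longleftrightarrow> L2 (restrict_space lborel A) f"
    and "set_lebesgue_integral lborel A g = integral\<^sup>L (restrict_space lborel A) g"
    and "(AE x in restrict_space lborel A. Q x) \<longleftrightarrow> (AE x in lborel. x \<in> A \<longrightarrow> Q x)"
proof -
  have A': "A \<inter> space lborel \<in> sets lborel" using A by simp
  show "sq_integrable_on A f \<longleftrightarrow> L2 (restrict_space lborel A) f"
    unfolding sq_integrable_on_def L2_def set_borel_measurable_def
    by (simp add: borel_measurable_restrict_space_iff[OF A'] set_integrable_eq[OF A'])
  show "set_lebesgue_integral lborel A g = integral\<^sup>L (restrict_space lborel A) g"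
    unfolding set_lebesgue_integral_def by (rule integral_restrict_space[OF A', symmetric])
  show "(AE x in restrict_space lborel A. Q x) \<longleftrightarrow> (AE x in lborel. x \<in> A \<longrightarrow> Q x)"
    by (rule AE_restrict_space_iff[OF A'])
qed

lemma finite_N:
  fixes A :: "(real^3) set"
  assumes A: "A \<in> sets lborel" "bounded A"
  shows "finite_measure (restrict_space lborel A)"
proof (rule finite_measureI)
  have "emeasure (restrict_space lborel A) (space (restrict_space lborel A)) = emeasure lborel A"
    using A by (simp add: emeasure_restrict_space space_restrict_space)
  then show "emeasure (restrict_space lborel A) (space (restrict_space lborel A)) \<noteq> \<infinity>"
    using emeasure_bounded_finite[OF A(2)] by simp
qed

definition chanF :: "real^3 \<Rightarrow> real \<Rightarrow> real^3 \<Rightarrow> real^3 \<Rightarrow> complex" where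
  "chanF er lam s r =
     (let k0 = 2 * pi / lam; d = norm (r - s); eta = 120 * pi in
       (\<i> * complex_of_real (k0 * eta) * exp (- \<i> * complex_of_real (k0 * d))
          / complex_of_real (4 * pi * d))
       * (1 + (\<i> / complex_of_real k0) / complex_of_real d
            - complex_of_real (1 / k0\<^sup>2) / complex_of_real (d\<^sup>2)))"

lemma chan_split: "chan er lam s r = csqrt (complex_of_real (er \<bullet> (s - r) / norm (r - s))) * chanF er lam s r"
  unfolding chan_def chanF_def Let_def by (simp add: mult.assoc)

lemma chan_meas: "chan er lam s \<in> borel_measurable lborel"
  unfolding chan_split[abs_def] chanF_def Let_def csqrt_of_real' by measurable

lemma chanF_cont:
  assumes "s \<notin> S"
  shows "continuous_on S (chanF er lam s)"
proof -
  have "\<forall>r\<in>S. norm (r - s) \<noteq> 0" using assms by auto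
  then show ?thesis unfolding chanF_def Let_def
    by (intro continuous_intros) auto
qed

lemma chan_bounded:
  assumes "bounded A" "s \<notin> closure A" "norm er = 1"
  shows "\<exists>M. \<forall>r\<in>A. cmod (chan er lam s r) \<le> M"
proof -
  have "compact (chanF er lam s ` closure A)"
    using assms by (intro compact_continuous_image chanF_cont compact_closure[THEN iffD2])
  then obtain M where M: "\<forall>y\<in>chanF er lam s ` closure A. norm y \<le> M"
    by (meson bounded_iff compact_imp_bounded)
  have "cmod (chan er lam s r) \<le> M" if r: "r \<in> A" for r
  proof -
    have rs: "r \<noteq> s" using r assms closure_subset by auto
    have "\<bar>er \<bullet> (s - r)\<bar> \<le> norm er * norm (s - r)" by (rule Cauchy_Schwarz_ineq2)
    then have "\<bar>er \<bullet> (s - r)\<bar> \<le> norm (r - s)" using assms(3) by (simp add: norm_minus_commute)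
    then have le1: "\<bar>er \<bullet> (s - r) / norm (r - s)\<bar> \<le> 1" using rs by (simp add: divide_le_eq_1)
    have "cmod (chan er lam s r) = sqrt \<bar>er \<bullet> (s - r) / norm (r - s)\<bar> * cmod (chanF er lam s r)"
      by (simp add: chan_split norm_mult norm_divide)
    also have "\<dots> \<le> 1 * M"
      using le1 M r closure_subset by (intro mult_mono) auto
    finally show ?thesis by simp
  qed
  then show ?thesis by blast
qed

lemma chan_nonzero:
  assumes "r \<noteq> s" "er \<bullet> (s - r) \<noteq> 0" "lam > 0"
  shows "chan er lam s r \<noteq> 0"
proof -
  define k0 where "k0 = 2 * pi / lam"
  define d where "d = norm (r - s)"
  have k0: "k0 > 0" using assms unfolding k0_def by simp
  have d: "d > 0" using assms unfolding d_def by simp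
  have "Im (1 + (\<i> / complex_of_real k0) / complex_of_real d
            - complex_of_real (1 / k0\<^sup>2) / complex_of_real (d\<^sup>2)) = 1 / (k0 * d)"
    using k0 d by (simp add: Im_divide power2_eq_square)
  moreover have f3: "(1 + (\<i> / complex_of_real k0) / complex_of_real d
            - complex_of_real (1 / k0\<^sup>2) / complex_of_real (d\<^sup>2)) \<noteq> 0"
  proof
    assume "(1 + (\<i> / complex_of_real k0) / complex_of_real d
            - complex_of_real (1 / k0\<^sup>2) / complex_of_real (d\<^sup>2)) = 0"
    then have "1 / (k0 * d) = 0" using calculation by (metis zero_complex.sel(2))
    then show False using k0 d by simp
  qed
  ultimately have f3: "(1 + (\<i> / complex_of_real k0) / complex_of_real d
            - complex_of_real (1 / k0\<^sup>2) / complex_of_real (d\<^sup>2)) \<noteq> 0" by blast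
  show ?thesis
    unfolding chan_def Let_def using f3 assms k0 d unfolding k0_def d_def
    by simp
qed

lemma chanL:
  assumes A: "A \<in> sets lborel" "bounded A" and s: "s \<notin> closure A" and er: "norm er = 1"
  shows "L2 (restrict_space lborel A) (\<lambda>r. cnj (chan er lam s r))"
proof -
  interpret finite_measure "restrict_space lborel A" using finite_N[OF A] .
  have m: "chan er lam s \<in> borel_measurable (restrict_space lborel A)"
    by (rule measurable_restrict_space1[OF chan_meas])
  then have m2[measurable]: "(\<lambda>r. cnj (chan er lam s r)) \<in> borel_measurable (restrict_space lborel A)"
    by (rule meas_cnj)
  obtain M where M: "\<forall>r\<in>A. cmod (chan er lam s r) \<le> M"
    using chan_bounded[OF A(2) s er] by blast
  have "integrable (restrict_space lborel A) (\<lambda>r. (cmod (cnj (chan er lam s r)))\<^sup>2)"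
  proof (rule integrable_const_bound[where B="M\<^sup>2"])
    show "AE x in restrict_space lborel A. norm ((cmod (cnj (chan er lam s x)))\<^sup>2) \<le> M\<^sup>2"
      using M by (intro AE_I2) (auto simp: space_restrict_space intro!: power_mono)
  qed measurable
  then show ?thesis unfolding L2_def using m2 by simp
qed

lemma hyper_null:
  fixes er :: "real^3"
  assumes "er \<noteq> 0"
  shows "{x. er \<bullet> x = c} \<in> null_sets lborel"
proof -
  have "{x. er \<bullet> x = c} \<in> null_sets lebesgue"
    using negligible_hyperplane[of er c] assms negligible_iff_null_sets by blast
  moreover have "{x. er \<bullet> x = c} \<in> sets lborel"
    using closed_hyperplane[of er c] by simp
  ultimately show ?thesis using null_sets_completion_iff by blast
qed

lemma chan_pos:
  assumes A: "A \<in> sets lborel" "bounded A" "emeasure lborel A > 0"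
    and s: "s \<notin> closure A" and er: "norm er = 1" and lam: "lam > 0"
  shows "nrm (restrict_space lborel A) (\<lambda>r. cnj (chan er lam s r)) > 0"
proof (rule ccontr)
  let ?N = "restrict_space lborel A"
  assume "\<not> ?thesis"
  then have "nrm ?N (\<lambda>r. cnj (chan er lam s r)) = 0" using nrm_nonneg[of ?N "\<lambda>r. cnj (chan er lam s r)"] by linarith
  then have "AE x in ?N. cnj (chan er lam s x) = 0" using nrm_zero_AE chanL[OF A(1,2) s er] by blast
  then have ae1: "AE x in lborel. x \<in> A \<longrightarrow> chan er lam s x = 0"
    using transl(3)[OF A(1)] by simp
  have ern: "er \<noteq> 0" using er by auto
  have ae2: "AE x in lborel. x \<notin> {x. er \<bullet> x = er \<bullet> s}"
    by (rule AE_not_in[OF hyper_null[OF ern]])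
  have "AE x in lborel. x \<notin> A"
    using ae1 ae2
  proof eventually_elim
    case (elim x)
    show ?case
    proof
      assume xA: "x \<in> A"
      then have "x \<noteq> s" using s closure_subset by auto
      moreover have "er \<bullet> (s - x) \<noteq> 0" using elim by (simp add: inner_diff_right)
      ultimately have "chan er lam s x \<noteq> 0" using chan_nonzero lam by blast
      then show False using elim xA by simp
    qed
  qed
  then have "A \<in> null_sets lborel" using AE_iff_null_sets A(1) by blast
  then show False using A(3) by auto
qed



definition sinrI :: "'a measure \<Rightarrow> nat \<Rightarrow> (nat \<Rightarrow> 'a \<Rightarrow> complex) \<Rightarrow> (nat \<Rightarrow> real)
                    \<Rightarrow> (nat \<Rightarrow> real) \<Rightarrow> (nat \<Rightarrow> 'a \<Rightarrow> complex) \<Rightarrow> nat \<Rightarrow> real" where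
  "sinrI N K h area sig2 W k =
     area k * (cmod (ip N (W k) (h k)))\<^sup>2 /
     ((\<Sum>j\<in>{..<K} - {k}. area j * (cmod (ip N (W j) (h k)))\<^sup>2) + sig2 k)"

lemma denom_pos:
  assumes "\<forall>k<K. area k > 0" "sig2 k > 0"
  shows "(\<Sum>j\<in>{..<K} - {k}. area j * (cmod (ip N (W j) (h k)))\<^sup>2) + sig2 k > 0"
proof -
  have "(\<Sum>j\<in>{..<K} - {k}. area j * (cmod (ip N (W j) (h k)))\<^sup>2) \<ge> 0"
    using assms by (intro sum_nonneg) (auto intro!: mult_nonneg_nonneg simp: less_imp_le)
  then show ?thesis using assms by linarith
qed

lemma sinrI_nonneg:
  assumes "\<forall>k<K. area k > 0" "\<forall>k<K. sig2 k > 0" "k < K"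
  shows "sinrI N K h area sig2 W k \<ge> 0"
  unfolding sinrI_def using denom_pos[of K area sig2 k N W h] assms
  by (intro divide_nonneg_pos mult_nonneg_nonneg) auto

lemma sinrI_pos_iff:
  assumes "\<forall>k<K. area k > 0" "\<forall>k<K. sig2 k > 0" "k < K"
  shows "sinrI N K h area sig2 W k > 0 \<longleftrightarrow> ip N (W k) (h k) \<noteq> 0"
  unfolding sinrI_def using denom_pos[of K area sig2 k N W h] assms
  by (auto simp: zero_less_divide_iff zero_less_mult_iff)

lemma frac_mono:
  fixes X Y sg c2 :: real
  assumes "X \<ge> 0" "Y \<ge> 0" "sg > 0" "c2 \<ge> 1"
  shows "X / (Y + sg) \<le> (c2 * X) / (c2 * Y + sg)"
    and "X > 0 \<Longrightarrow> c2 > 1 \<Longrightarrow> X / (Y + sg) < (c2 * X) / (c2 * Y + sg)"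
proof -
  have p1: "Y + sg > 0" "c2 * Y + sg > 0" using assms by (auto intro: add_nonneg_pos)
  have "X * (c2 * Y + sg) \<le> c2 * X * (Y + sg)"
    using assms mult_right_mono[OF assms(4), of "X * sg"] by (simp add: algebra_simps)
  then show "X / (Y + sg) \<le> (c2 * X) / (c2 * Y + sg)"
    using p1 by (simp add: divide_simps)
  assume X: "X > 0" "c2 > 1"
  have "X * sg < c2 * (X * sg)" using X assms by simp
  then have "X * (c2 * Y + sg) < c2 * X * (Y + sg)"
    by (simp add: algebra_simps)
  then show "X / (Y + sg) < (c2 * X) / (c2 * Y + sg)"
    using p1 by (simp add: divide_simps)
qed

lemma sinrI_scale:
  assumes "\<forall>k<K. area k > 0" "\<forall>k<K. sig2 k > 0" "k < K" "c \<ge> 1"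
    and sc: "\<forall>j<K. ip N (W j) (h k) = complex_of_real c * ip N (V j) (h k)"
  shows "sinrI N K h area sig2 V k \<le> sinrI N K h area sig2 W k"
    and "c > 1 \<Longrightarrow> ip N (V k) (h k) \<noteq> 0 \<Longrightarrow> sinrI N K h area sig2 V k < sinrI N K h area sig2 W k"
proof -
  define X where "X = area k * (cmod (ip N (V k) (h k)))\<^sup>2"
  define Y where "Y = (\<Sum>j\<in>{..<K} - {k}. area j * (cmod (ip N (V j) (h k)))\<^sup>2)"
  have Y0: "Y \<ge> 0" unfolding Y_def using assms(1)
    by (intro sum_nonneg) (auto intro!: mult_nonneg_nonneg simp: less_imp_le)
  have X0: "X \<ge> 0" unfolding X_def using assms(1,3) by (auto intro!: mult_nonneg_nonneg simp: less_imp_le)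
  have c0: "c \<ge> 0" using assms by simp
  have eV: "sinrI N K h area sig2 V k = X / (Y + sig2 k)" unfolding sinrI_def X_def Y_def ..
  have nY: "(\<Sum>j\<in>{..<K} - {k}. area j * (cmod (ip N (W j) (h k)))\<^sup>2) = c\<^sup>2 * Y"
    unfolding Y_def sum_distrib_left by (rule sum.cong) (use sc c0 in \<open>auto simp: norm_mult power_mult_distrib\<close>)
  have nX: "area k * (cmod (ip N (W k) (h k)))\<^sup>2 = c\<^sup>2 * X"
    unfolding X_def using sc c0 assms(3) by (simp add: norm_mult power_mult_distrib)
  have "sinrI N K h area sig2 W k = (c\<^sup>2 * X) / (c\<^sup>2 * Y + sig2 k)"
    unfolding sinrI_def nX nY ..
  note eW = this
  have c2: "c\<^sup>2 \<ge> 1" using assms(4) by (simp add: one_le_power)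
  show "sinrI N K h area sig2 V k \<le> sinrI N K h area sig2 W k"
    unfolding eV eW using frac_mono(1)[OF X0 Y0 _ c2] assms by auto
  assume c1: "c > 1" and nz: "ip N (V k) (h k) \<noteq> 0"
  have "X > 0" unfolding X_def using assms(1,3) nz by auto
  moreover have "c\<^sup>2 > 1" using c1 by (simp add: one_less_power)
  ultimately show "sinrI N K h area sig2 V k < sinrI N K h area sig2 W k"
    unfolding eV eW using frac_mono(2)[OF X0 Y0 _ c2] assms by auto
qed

lemma nrm_scale: "nrm N (\<lambda>x. c * f x) = (cmod c)\<^sup>2 * nrm N f"
  unfolding nrm_def by (simp add: norm_mult power_mult_distrib)



theorem proposition1:
  fixes A :: "(real^3) set" and K :: nat and s :: "nat \<Rightarrow> real^3"
    and area sig2 :: "nat \<Rightarrow> real" and P lam :: real and er :: "real^3"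
    and V :: "nat \<Rightarrow> real^3 \<Rightarrow> complex"
  assumes A_meas: "A \<in> sets lborel" and A_pos: "emeasure lborel A > 0"
    and A_bdd: "bounded A"
    and er_unit: "norm er = 1" and lam_pos: "lam > 0"
    and K_pos: "K \<ge> 1"
    and s_out: "\<forall>k<K. s k \<notin> closure A"
    and area_pos: "\<forall>k<K. area k > 0" and sig2_pos: "\<forall>k<K. sig2 k > 0"
    and P_pos: "P > 0"
    and V_feas: "feasible A K P V"
    and V_opt: "\<forall>W. feasible A K P W \<longrightarrow>
                  sum_rate A K (\<lambda>k. chan er lam (s k)) area sig2 W
                  \<le> sum_rate A K (\<lambda>k. chan er lam (s k)) area sig2 V"
  shows "\<exists>b :: nat \<Rightarrow> nat \<Rightarrow> complex. \<forall>k<K. AE r in lborel. r \<in> A \<longrightarrow>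
           V k r = (\<Sum>j<K. b j k * cnj (chan er lam (s j) r))"
proof -
  define N where "N = restrict_space lborel A"
  define h where "h = (\<lambda>k r. cnj (chan er lam (s k) r))"
  define rate where "rate = (\<lambda>W. \<Sum>k<K. log 2 (1 + sinrI N K h area sig2 W k))"
  have hL: "\<forall>i<K. L2 N (h i)" unfolding N_def h_def using chanL[OF A_meas A_bdd _ er_unit] s_out by blast
  have feas_iff: "feasible A K P W \<longleftrightarrow> (\<forall>k<K. L2 N (W k)) \<and> (\<Sum>k<K. nrm N (W k)) = P" for W
  proof -
    have "(LINT r:A|lborel. (cmod (W k r))\<^sup>2) = nrm N (W k)" for k
      unfolding N_def nrm_def set_lebesgue_integral_def
      by (rule integral_restrict_space[symmetric]) (use A_meas in simp)
    then show ?thesis unfolding feasible_def N_def using transl(1)[OF A_meas] by simp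
  qed
  have rate_eq: "sum_rate A K (\<lambda>k. chan er lam (s k)) area sig2 W = rate W" for W
  proof -
    have "(LINT r:A|lborel. chan er lam (s k) r * W j r) = ip N (W j) (h k)" for k j
      unfolding N_def transl(2)[OF A_meas] ip_def h_def by (simp add: mult.commute)
    then show ?thesis unfolding sum_rate_def rate_def sinr_def sinrI_def by simp
  qed
  have VL: "\<forall>k<K. L2 N (V k)" and Vpow: "(\<Sum>k<K. nrm N (V k)) = P"
    using V_feas feas_iff by auto
  have "\<forall>k\<in>{..<K}. \<exists>b. \<forall>i<K. ip N (\<lambda>x. V k x - (\<Sum>j<K. b j * h j x)) (h i) = 0"
    using proj[OF hL] VL by blast
  then obtain B where B: "\<forall>k\<in>{..<K}. \<forall>i<K. ip N (\<lambda>x. V k x - (\<Sum>j<K. B k j * h j x)) (h i) = 0"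
    by (metis bchoice)
  define Pk where "Pk = (\<lambda>k x. \<Sum>j<K. B k j * h j x)"
  define Qk where "Qk = (\<lambda>k x. V k x - Pk k x)"
  have combL: "L2 N (\<lambda>x. \<Sum>j<K. a j * h j x)" for a
    by (rule L2_sum) (use hL in \<open>auto intro: L2_scale\<close>)
  have PL: "L2 N (Pk k)" for k unfolding Pk_def by (rule combL)
  have QL: "k < K \<Longrightarrow> L2 N (Qk k)" for k unfolding Qk_def using VL PL L2_diff by blast
  have Qo: "k < K \<Longrightarrow> i < K \<Longrightarrow> ip N (Qk k) (h i) = 0" for k i
    using B unfolding Qk_def Pk_def by auto
  have QP: "k < K \<Longrightarrow> ip N (Qk k) (Pk j) = 0" for k j
    unfolding Pk_def using ip_orth_comb[OF hL QL] Qo by blast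
  have PQ: "k < K \<Longrightarrow> ip N (Pk j) (Qk k) = 0" for k j
    using QP ip_cnj[of N "Pk j" "Qk k"] by simp
  have Vsplit: "V k = (\<lambda>x. Pk k x + Qk k x)" for k unfolding Qk_def by simp
  have SV: "k < K \<Longrightarrow> i < K \<Longrightarrow> ip N (V k) (h i) = ip N (Pk k) (h i)" for k i
    using ip_add1[OF PL QL hL[rule_format]] Qo by (simp add: Vsplit[of k])
  have nV: "k < K \<Longrightarrow> nrm N (V k) = nrm N (Pk k) + nrm N (Qk k)" for k
  proof -
    assume k: "k < K"
    have "ip N (V k) (V k) = ip N (Pk k) (Pk k) + ip N (Pk k) (Qk k) + (ip N (Qk k) (Pk k) + ip N (Qk k) (Qk k))"
      unfolding Vsplit[of k]
      by (simp add: ip_add1[OF PL QL[OF k] L2_add[OF PL QL[OF k]]] ip_add2[OF PL QL[OF k] PL]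
          ip_add2[OF PL QL[OF k] QL[OF k]])
    then have "complex_of_real (nrm N (V k)) = complex_of_real (nrm N (Pk k) + nrm N (Qk k))"
      using PQ[OF k] QP[OF k] by (simp add: ip_self)
    then show ?thesis by (simp only: of_real_eq_iff)
  qed
  have claim: "\<forall>k<K. nrm N (Qk k) = 0"
  proof (rule ccontr)
    assume "\<not> ?thesis"
    then obtain k0 where k0: "k0 < K" "nrm N (Qk k0) \<noteq> 0" by blast
    have h0pos: "nrm N (h 0) > 0" unfolding N_def h_def
      using chan_pos[OF A_meas A_bdd A_pos _ er_unit lam_pos] s_out K_pos by auto
    define \<alpha> where "\<alpha> = complex_of_real (sqrt (P / nrm N (h 0)))"
    define W0 where "W0 = (\<lambda>k::nat. if k = 0 then (\<lambda>x. \<alpha> * h 0 x) else (\<lambda>x. 0))"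
    have W0L: "\<forall>k<K. L2 N (W0 k)" unfolding W0_def using hL K_pos L2_scale L2_zero by auto
    have nW0: "nrm N (W0 k) = (if k = 0 then P else 0)" for k
    proof (cases "k = 0")
      case True
      have "(cmod \<alpha>)\<^sup>2 = P / nrm N (h 0)" unfolding \<alpha>_def using P_pos h0pos by simp
      then show ?thesis using True h0pos unfolding W0_def by (simp add: nrm_scale)
    qed (simp add: W0_def nrm_def)
    have "(\<Sum>k<K. nrm N (W0 k)) = P" unfolding nW0 using K_pos by simp
    then have fW0: "feasible A K P W0" using W0L feas_iff by blast
    have ipW0: "ip N (W0 0) (h 0) \<noteq> 0"
      unfolding W0_def using h0pos P_pos by (simp add: ip_scale1 ip_self \<alpha>_def)
    have logpos: "0 \<le> log 2 (1 + sinrI N K h area sig2 W k)" if "k < K" for W k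
      using sinrI_nonneg[OF area_pos sig2_pos that, of N h W] by simp
    have "(\<Sum>k<K. (0::real)) < rate W0" unfolding rate_def
    proof (rule sum_strict_mono_ex1)
      show "\<forall>x\<in>{..<K}. 0 \<le> log 2 (1 + sinrI N K h area sig2 W0 x)" using logpos by auto
      have "sinrI N K h area sig2 W0 0 > 0" using sinrI_pos_iff[OF area_pos sig2_pos, of 0 N h W0] K_pos ipW0 by simp
      then show "\<exists>a\<in>{..<K}. 0 < log 2 (1 + sinrI N K h area sig2 W0 a)" using K_pos by (intro bexI[of _ 0]) auto
    qed simp
    then have rV: "rate V > 0" using V_opt fW0 rate_eq by fastforce
    obtain k1 where k1: "k1 < K" "ip N (V k1) (h k1) \<noteq> 0"
    proof (rule ccontr)
      assume "\<not> thesis"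
      then have "\<forall>k<K. ip N (V k) (h k) = 0" using that by blast
      then have "rate V = 0" unfolding rate_def sinrI_def by simp
      then show False using rV by simp
    qed
    have "nrm N (Pk k1) \<noteq> 0" using k1 SV nrm_zero_ip[OF PL] by metis
    then have Pk1: "nrm N (Pk k1) > 0" using nrm_nonneg[of N "Pk k1"] by linarith
    define p where "p = (\<Sum>k<K. nrm N (Pk k))"
    have "nrm N (Pk k1) \<le> p" unfolding p_def using k1 nrm_nonneg by (intro member_le_sum) auto
    then have p0: "p > 0" using Pk1 by linarith
    have "nrm N (Qk k0) \<le> (\<Sum>k<K. nrm N (Qk k))" using k0 nrm_nonneg by (intro member_le_sum) auto
    moreover have "P = p + (\<Sum>k<K. nrm N (Qk k))" unfolding p_def Vpow[symmetric] sum.distrib[symmetric]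
      using nV by simp
    moreover have "nrm N (Qk k0) > 0" using k0 nrm_nonneg[of N "Qk k0"] by linarith
    ultimately have Pp: "P > p" by linarith
    define c where "c = sqrt (P / p)"
    have c1: "c > 1" unfolding c_def using Pp p0 by simp
    have c2: "c\<^sup>2 = P / p" unfolding c_def using Pp p0 by simp
    define W where "W = (\<lambda>(k::nat) x. complex_of_real c * Pk k x)"
    have "(\<Sum>k<K. nrm N (W k)) = c\<^sup>2 * p" unfolding W_def p_def
      by (simp add: nrm_scale sum_distrib_left)
    also have "\<dots> = P" using c2 p0 by simp
    finally have fW: "feasible A K P W" using feas_iff PL unfolding W_def by (auto intro: L2_scale)
    have sc: "\<forall>j<K. ip N (W j) (h k) = complex_of_real c * ip N (V j) (h k)" if "k < K" for k
      unfolding W_def using SV that by (simp add: ip_scale1)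
    have "rate V < rate W" unfolding rate_def
    proof (rule sum_strict_mono_ex1)
      show "\<forall>x\<in>{..<K}. log 2 (1 + sinrI N K h area sig2 V x) \<le> log 2 (1 + sinrI N K h area sig2 W x)"
      proof
        fix x assume x: "x \<in> {..<K}"
        then have xK: "x < K" by simp
        have "sinrI N K h area sig2 V x \<le> sinrI N K h area sig2 W x"
          by (rule sinrI_scale(1)[where N=N and h=h and W=W and V=V, OF area_pos sig2_pos xK less_imp_le[OF c1] sc[OF xK]])
        then show "log 2 (1 + sinrI N K h area sig2 V x) \<le> log 2 (1 + sinrI N K h area sig2 W x)"
          using sinrI_nonneg[OF area_pos sig2_pos, of x N h V] x by simp
      qed
      have "sinrI N K h area sig2 V k1 < sinrI N K h area sig2 W k1"
        by (rule sinrI_scale(2)[where N=N and h=h and W=W and V=V, OF area_pos sig2_pos k1(1) less_imp_le[OF c1] sc[OF k1(1)] c1 k1(2)])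
      then show "\<exists>a\<in>{..<K}. log 2 (1 + sinrI N K h area sig2 V a) < log 2 (1 + sinrI N K h area sig2 W a)"
        using sinrI_nonneg[OF area_pos sig2_pos k1(1), of N h V] k1 by (intro bexI[of _ k1]) auto
    qed simp
    then show False using V_opt fW rate_eq by fastforce
  qed
  show ?thesis
  proof (intro exI[of _ "\<lambda>j k. B k j"] allI impI)
    fix k assume k: "k < K"
    have "AE x in N. Qk k x = 0" by (rule nrm_zero_AE[OF QL[OF k]]) (use claim k in auto)
    then have "AE x in lborel. x \<in> A \<longrightarrow> Qk k x = 0" unfolding N_def transl(3)[OF A_meas] .
    then show "AE r in lborel. r \<in> A \<longrightarrow> V k r = (\<Sum>j<K. B k j * cnj (chan er lam (s j) r))"
      by eventually_elim (simp add: Qk_def Pk_def h_def)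
  qed
qed

end
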